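(* There is a comonad in Kleisli form $(\mathbb{H}, \varepsilon, (\cdot)^* )$ on the category $\mathsf{HGraph}$ of hypergraphs. The counit is defined on representatives by $\varepsilon([p,a]) = a$. Coextension of a hypergraph morphism $h:\mathbb{H}\mathcal{H}_1\to\mathcal{H}_2$ is defined on representatives by \[ h^*([[U_1,\ldots,U_n], a]) = [[V_1,\ldots,V_n], h([[U_1,\ldots,U_n], a])] \] where $V_j = \{ h([[U_1,\ldots,U_j], b]) \mid b \in U_j \}$ for $1 \leq j \leq n$.
   Context: A hypergraph $(V,E)$ consists of a set $V$ of vertices and a family $E$ of finite subsets of $V$ (hyperedges); a morphism is a function on vertices mapping hyperedges to hyperedges. For a hypergraph, a focussed play is $\langle p,a\rangle$ with $p=[U_1,\ldots,U_n]$ a non-empty list of hyperedges and $a\in U_n$. Define $\langle p,a\rangle\sim\langle q,a'\rangle$ iff $a=a'$, the greatest common prefix $p\sqcap q$ is non-empty, and $a$ belongs to the last hyperedge of every play on the prefix-order paths from $p\sqcap q$ to $p$ and to $q$; $[p,a]$ denotes the equivalence class. $\mathbb{H}(V,E)$ has vertices the classes $[p,a]$ and hyperedges the sets $\{[p,a]\mid a\in U\}$ for a play $p$ with last element $U \in E$. *)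

theory Defs
  imports Main "HOL-Library.Sublist"
begin

type_synonym 'a hgraph = "'a set \<times> 'a set set"

definition hypergraph :: "'a hgraph \<Rightarrow> bool" where
  "hypergraph G \<longleftrightarrow> (\<forall>U\<in>snd G. finite U \<and> U \<subseteq> fst G)"

definition hmorph :: "'a hgraph \<Rightarrow> 'b hgraph \<Rightarrow> ('a \<Rightarrow> 'b) \<Rightarrow> bool" where
  "hmorph G1 G2 f \<longleftrightarrow> f ` fst G1 \<subseteq> fst G2 \<and> (\<forall>U\<in>snd G1. f ` U \<in> snd G2)"

definition fplay :: "'a set set \<Rightarrow> 'a set list \<Rightarrow> 'a \<Rightarrow> bool" where
  "fplay E p a \<longleftrightarrow> p \<noteq> [] \<and> set p \<subseteq> E \<and> a \<in> last p"

definition play_sim :: "'a set list \<times> 'a \<Rightarrow> 'a set list \<times> 'a \<Rightarrow> bool" where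
  "play_sim x y \<longleftrightarrow>
     (let p = fst x; a = snd x; q = fst y; a' = snd y; r = longest_common_prefix p q in
       a = a' \<and> r \<noteq> [] \<and>
       (\<forall>s. prefix r s \<and> prefix s p \<longrightarrow> a \<in> last s) \<and>
       (\<forall>s. prefix r s \<and> prefix s q \<longrightarrow> a \<in> last s))"

definition pcls :: "'a set set \<Rightarrow> 'a set list \<Rightarrow> 'a \<Rightarrow> ('a set list \<times> 'a) set" where
  "pcls E p a = {(q, b). fplay E q b \<and> play_sim (p, a) (q, b)}"

definition HH :: "'a hgraph \<Rightarrow> ('a set list \<times> 'a) set hgraph" where
  "HH G = ({pcls (snd G) p a | p a. fplay (snd G) p a},
           {{pcls (snd G) p a | a. a \<in> last p} | p. p \<noteq> [] \<and> set p \<subseteq> snd G})"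

definition counit :: "('a set list \<times> 'a) set \<Rightarrow> 'a" where
  "counit c = snd (SOME x. x \<in> c)"

text \<open>The plays [V_1,...,V_n] in the coextension formula, for the play p = [U_1,...,U_n].\<close>
definition coext_list :: "'a set set \<Rightarrow> (('a set list \<times> 'a) set \<Rightarrow> 'b) \<Rightarrow> 'a set list \<Rightarrow> 'b set list" where
  "coext_list E1 h p = map (\<lambda>j. {h (pcls E1 (take (Suc j) p) b) | b. b \<in> p ! j}) [0..<length p]"

definition coext :: "'a hgraph \<Rightarrow> 'b hgraph \<Rightarrow> (('a set list \<times> 'a) set \<Rightarrow> 'b)
                      \<Rightarrow> ('a set list \<times> 'a) set \<Rightarrow> ('b set list \<times> 'b) set" where
  "coext G1 G2 h c = (let x = (SOME x. x \<in> c) in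
      pcls (snd G2) (coext_list (snd G1) h (fst x)) (h c))"

end

theory Submission
  imports Defs
begin

definition onpath :: "'a set list \<Rightarrow> 'a set list \<Rightarrow> 'a \<Rightarrow> bool" where
  "onpath r p a \<longleftrightarrow> (\<forall>s. prefix r s \<and> prefix s p \<longrightarrow> a \<in> last s)"

lemma play_sim_iff:
  "play_sim (p, a) (q, b) \<longleftrightarrow> a = b \<and> (\<exists>r. r \<noteq> [] \<and> prefix r p \<and> prefix r q \<and> onpath r p a \<and> onpath r q a)"
proof
  assume "play_sim (p, a) (q, b)"
  then show "a = b \<and> (\<exists>r. r \<noteq> [] \<and> prefix r p \<and> prefix r q \<and> onpath r p a \<and> onpath r q a)"
    unfolding play_sim_def onpath_def Let_def
    by (auto intro!: exI[of _ "longest_common_prefix p q"] longest_common_prefix_prefix1 longest_common_prefix_prefix2)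
next
  assume "a = b \<and> (\<exists>r. r \<noteq> [] \<and> prefix r p \<and> prefix r q \<and> onpath r p a \<and> onpath r q a)"
  then obtain r where ab: "a = b" and r: "r \<noteq> []" "prefix r p" "prefix r q" "onpath r p a" "onpath r q a" by blast
  have rl: "prefix r (longest_common_prefix p q)" using r longest_common_prefix_max_prefix by blast
  hence "longest_common_prefix p q \<noteq> []" using r(1) by auto
  moreover have "\<forall>s. prefix (longest_common_prefix p q) s \<and> prefix s p \<longrightarrow> a \<in> last s"
    using r(4) rl unfolding onpath_def by (meson prefix_order.trans)
  moreover have "\<forall>s. prefix (longest_common_prefix p q) s \<and> prefix s q \<longrightarrow> a \<in> last s"
    using r(5) rl unfolding onpath_def by (meson prefix_order.trans)
  ultimately show "play_sim (p, a) (q, b)" unfolding play_sim_def Let_def using ab by simp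
qed

lemma play_sim_sym: "play_sim (p, a) (q, b) \<Longrightarrow> play_sim (q, b) (p, a)"
  unfolding play_sim_iff by blast

lemma play_sim_refl: "fplay E p a \<Longrightarrow> play_sim (p, a) (p, a)"
  unfolding play_sim_iff fplay_def onpath_def
  by (auto intro!: exI[of _ p] dest: prefix_order.antisym)

lemma play_sim_trans:
  assumes "play_sim (p, a) (q, b)" "play_sim (q, b) (t, c)"
  shows "play_sim (p, a) (t, c)"
proof -
  from assms(1) obtain r1 where ab: "a = b" and r1: "r1 \<noteq> []" "prefix r1 p" "prefix r1 q" "onpath r1 p a" "onpath r1 q a"
    unfolding play_sim_iff by blast
  from assms(2) obtain r2 where bc: "b = c" and r2: "r2 \<noteq> []" "prefix r2 q" "prefix r2 t" "onpath r2 q a" "onpath r2 t a"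
    unfolding play_sim_iff ab by blast
  from r1(3) r2(2) have "prefix r1 r2 \<or> prefix r2 r1" using prefix_same_cases by blast
  then show ?thesis
  proof
    assume h: "prefix r1 r2"
    have "onpath r1 t a" unfolding onpath_def
    proof (intro allI impI)
      fix s assume s: "prefix r1 s \<and> prefix s t"
      then have "prefix r2 s \<or> prefix s r2" using r2(3) prefix_same_cases by blast
      then show "a \<in> last s" using r1 r2 s unfolding onpath_def by (meson prefix_order.trans)
    qed
    then show ?thesis unfolding play_sim_iff using ab bc r1 r2 h by (meson prefix_order.trans)
  next
    assume h: "prefix r2 r1"
    have "onpath r2 p a" unfolding onpath_def
    proof (intro allI impI)
      fix s assume s: "prefix r2 s \<and> prefix s p"
      then have "prefix r1 s \<or> prefix s r1" using r1(2) prefix_same_cases by blast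
      then show "a \<in> last s" using r1 r2 s unfolding onpath_def by (meson prefix_order.trans)
    qed
    then show ?thesis unfolding play_sim_iff using ab bc r1 r2 h by (meson prefix_order.trans)
  qed
qed

lemma pcls_mem: assumes "fplay E p a" shows "(p, a) \<in> pcls E p a"
  unfolding pcls_def using assms play_sim_refl[OF assms] by simp

lemma pcls_snd: "x \<in> pcls E p a \<Longrightarrow> snd x = a"
  unfolding pcls_def play_sim_iff by auto

lemma pcls_eq:
  assumes "play_sim (p, a) (q, b)"
  shows "pcls E p a = pcls E q b"
proof -
  have "play_sim (p, a) (x1, x2) = play_sim (q, b) (x1, x2)" for x1 x2
  proof
    assume "play_sim (p, a) (x1, x2)"
    then show "play_sim (q, b) (x1, x2)" by (rule play_sim_trans[OF play_sim_sym[OF assms]])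
  next
    assume "play_sim (q, b) (x1, x2)"
    then show "play_sim (p, a) (x1, x2)" by (rule play_sim_trans[OF assms])
  qed
  then show ?thesis unfolding pcls_def by simp
qed

lemma pcls_some:
  assumes "fplay E p a"
  shows "fplay E (fst (SOME x. x \<in> pcls E p a)) (snd (SOME x. x \<in> pcls E p a))"
    "snd (SOME x. x \<in> pcls E p a) = a"
    "play_sim (p, a) (SOME x. x \<in> pcls E p a)"
proof -
  have m: "(SOME x. x \<in> pcls E p a) \<in> pcls E p a" using pcls_mem[OF assms] by (rule someI)
  then show "fplay E (fst (SOME x. x \<in> pcls E p a)) (snd (SOME x. x \<in> pcls E p a))"
    "play_sim (p, a) (SOME x. x \<in> pcls E p a)"
    unfolding pcls_def by (auto simp: case_prod_beta)
  show "snd (SOME x. x \<in> pcls E p a) = a" by (rule pcls_snd[OF m])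
qed

lemma counit_pcls: "fplay E p a \<Longrightarrow> counit (pcls E p a) = a"
  unfolding counit_def by (rule pcls_some(2))

lemma pcls_prefix:
  assumes "prefix r p" "r \<noteq> []" "\<forall>s. prefix r s \<and> prefix s p \<longrightarrow> a \<in> last s"
  shows "pcls E r a = pcls E p a"
  apply (rule pcls_eq) unfolding play_sim_iff onpath_def using assms
  by (auto intro!: exI[of _ r] dest: prefix_order.antisym)

lemma length_CL[simp]: "length (coext_list E h p) = length p"
  unfolding coext_list_def by simp

lemma nth_CL: "j < length p \<Longrightarrow> coext_list E h p ! j = {h (pcls E (take (Suc j) p) b) | b. b \<in> p ! j}"
  unfolding coext_list_def by simp

lemma take_CL: "take k (coext_list E h p) = coext_list E h (take k p)"
  by (rule nth_equalityI) (auto simp: nth_CL)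

lemma last_CL: "p \<noteq> [] \<Longrightarrow> last (coext_list E h p) = {h (pcls E p b) | b. b \<in> last p}"
proof -
  assume p: "p \<noteq> []"
  have "last (coext_list E h p) = coext_list E h p ! (length p - 1)"
    using p by (metis last_conv_nth length_CL length_0_conv)
  also have "\<dots> = {h (pcls E p b) | b. b \<in> last p}"
    using p by (simp add: nth_CL last_conv_nth)
  finally show ?thesis .
qed

lemma last_take_Suc: "j < length p \<Longrightarrow> last (take (Suc j) p) = p ! j"
  by (simp add: take_Suc_conv_app_nth)

lemma fplay_take: "set p \<subseteq> E \<Longrightarrow> j < length p \<Longrightarrow> b \<in> p ! j \<Longrightarrow> fplay E (take (Suc j) p) b"
  unfolding fplay_def using last_take_Suc[of j p] set_take_subset[of "Suc j" p]
  by (cases p) auto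

lemma CL_edges:
  assumes h: "hmorph (HH G1) G2 h" and p: "set p \<subseteq> snd G1"
  shows "set (coext_list (snd G1) h p) \<subseteq> snd G2"
proof
  fix x assume "x \<in> set (coext_list (snd G1) h p)"
  then obtain j where j: "j < length p" "x = coext_list (snd G1) h p ! j"
    by (auto simp: in_set_conv_nth)
  let ?t = "take (Suc j) p"
  have t: "?t \<noteq> []" "set ?t \<subseteq> snd G1" using j p set_take_subset[of "Suc j" p] by (cases p; auto)+
  have "{pcls (snd G1) ?t b | b. b \<in> last ?t} \<in> snd (HH G1)"
    unfolding HH_def using t by auto
  then have "h ` {pcls (snd G1) ?t b | b. b \<in> last ?t} \<in> snd G2"
    using h unfolding hmorph_def by blast
  moreover have "h ` {pcls (snd G1) ?t b | b. b \<in> last ?t} = x"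
    using j by (auto simp: nth_CL last_take_Suc)
  ultimately show "x \<in> snd G2" by simp
qed

lemma fplay_CL:
  assumes h: "hmorph (HH G1) G2 h" and p: "fplay (snd G1) p a"
  shows "fplay (snd G2) (coext_list (snd G1) h p) (h (pcls (snd G1) p a))"
proof -
  have "h (pcls (snd G1) p a) \<in> last (coext_list (snd G1) h p)"
    using p unfolding fplay_def by (auto simp: last_CL)
  moreover have "coext_list (snd G1) h p \<noteq> []" using p unfolding fplay_def
    by (metis length_CL length_0_conv)
  ultimately show ?thesis using CL_edges[OF h] p unfolding fplay_def by auto
qed

lemma prefix_take_len: "prefix r p \<Longrightarrow> r = take (length r) p"
  by (auto elim!: prefixE)

lemma prefix_take_ge: "prefix r p \<Longrightarrow> length r \<le> k \<Longrightarrow> prefix r (take k p)"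
  by (auto elim!: prefixE simp: take_append)

lemma onpath_CL:
  assumes r: "prefix r p" "r \<noteq> []" "onpath r p a"
  shows "onpath (coext_list E h r) (coext_list E h p) (h (pcls E p a))"
  unfolding onpath_def
proof (intro allI impI)
  fix s assume s: "prefix (coext_list E h r) s \<and> prefix s (coext_list E h p)"
  define k where "k = length s"
  have s1: "s = take k (coext_list E h p)" unfolding k_def
    using s by (intro prefix_take_len) blast
  have sk: "s = coext_list E h (take k p)" using s1 take_CL[of k E h p] by simp
  have kr: "length r \<le> k" using s prefix_length_le k_def by fastforce
  have kp: "k \<le> length p" using s prefix_length_le k_def by fastforce
  have tne: "take k p \<noteq> []" using kr kp r(2) by (cases r) auto
  have rt: "prefix r (take k p)" using prefix_take_ge[OF r(1) kr] .
  have "a \<in> last (take k p)" using r(3) rt take_is_prefix unfolding onpath_def by blast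
  moreover have "pcls E (take k p) a = pcls E p a"
  proof (rule pcls_prefix)
    show "prefix (take k p) p" "take k p \<noteq> []" by (rule take_is_prefix) (rule tne)
    show "\<forall>s. prefix (take k p) s \<and> prefix s p \<longrightarrow> a \<in> last s"
      using r(3) rt unfolding onpath_def by (meson prefix_order.trans)
  qed
  ultimately have "h (pcls E p a) = h (pcls E (take k p) a) \<and> a \<in> last (take k p)" by simp
  then have "h (pcls E p a) \<in> {h (pcls E (take k p) b) | b. b \<in> last (take k p)}"
    by blast
  then show "h (pcls E p a) \<in> last s" using sk tne last_CL[OF tne, of E h] by simp
qed

lemma coext_wd:
  assumes "play_sim (p, a) (q, a)"
  shows "pcls E2 (coext_list E h p) (h (pcls E p a)) = pcls E2 (coext_list E h q) (h (pcls E p a))"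
proof -
  obtain r where r: "r \<noteq> []" "prefix r p" "prefix r q" "onpath r p a" "onpath r q a"
    using assms unfolding play_sim_iff by blast
  have eq: "pcls E q a = pcls E p a" using pcls_eq[OF assms] by simp
  have "play_sim (coext_list E h p, h (pcls E p a)) (coext_list E h q, h (pcls E p a))"
    unfolding play_sim_iff
  proof (intro conjI exI[of _ "coext_list E h r"])
    show "coext_list E h r \<noteq> []" using r(1) by (simp add: coext_list_def)
    have "coext_list E h r = coext_list E h (take (length r) p)"
      by (rule arg_cong[OF prefix_take_len[OF r(2)]])
    also have "\<dots> = take (length r) (coext_list E h p)" by (rule take_CL[symmetric])
    finally show "prefix (coext_list E h r) (coext_list E h p)" by (simp add: take_is_prefix)
    have "coext_list E h r = coext_list E h (take (length r) q)"
      by (rule arg_cong[OF prefix_take_len[OF r(3)]])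
    also have "\<dots> = take (length r) (coext_list E h q)" by (rule take_CL[symmetric])
    finally show "prefix (coext_list E h r) (coext_list E h q)" by (simp add: take_is_prefix)
    show "onpath (coext_list E h r) (coext_list E h p) (h (pcls E p a))"
      by (rule onpath_CL[OF r(2) r(1) r(4)])
    show "onpath (coext_list E h r) (coext_list E h q) (h (pcls E p a))"
      using onpath_CL[OF r(3) r(1) r(5), of E h] eq by simp
  qed simp
  then show ?thesis by (rule pcls_eq)
qed

lemma coext_pcls:
  assumes "fplay (snd G1) p a"
  shows "coext G1 G2 h (pcls (snd G1) p a) = pcls (snd G2) (coext_list (snd G1) h p) (h (pcls (snd G1) p a))"
proof -
  define x where "x = (SOME x. x \<in> pcls (snd G1) p a)"
  have x: "snd x = a" "play_sim (p, a) x" unfolding x_def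
    by (rule pcls_some(2)[OF assms], rule pcls_some(3)[OF assms])
  have "x = (fst x, a)" using x(1) by (cases x) simp
  then have x2: "play_sim (p, a) (fst x, a)" using x(2) by simp
  have "coext G1 G2 h (pcls (snd G1) p a) = pcls (snd G2) (coext_list (snd G1) h (fst x)) (h (pcls (snd G1) p a))"
    unfolding coext_def x_def[symmetric] Let_def ..
  also have "\<dots> = pcls (snd G2) (coext_list (snd G1) h p) (h (pcls (snd G1) p a))"
    by (rule coext_wd[OF x2, symmetric])
  finally show ?thesis .
qed


lemma HH_edgeE:
  assumes "U \<in> snd (HH G)"
  obtains p where "p \<noteq> []" "set p \<subseteq> snd G" "U = (\<lambda>a. pcls (snd G) p a) ` last p"
  using assms unfolding HH_def by auto

lemma HH_vertE:
  assumes "x \<in> fst (HH G)"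
  obtains p a where "fplay (snd G) p a" "x = pcls (snd G) p a"
  using assms unfolding HH_def by auto

lemma HH_edgeI: "p \<noteq> [] \<Longrightarrow> set p \<subseteq> snd G \<Longrightarrow> (\<lambda>a. pcls (snd G) p a) ` last p \<in> snd (HH G)"
  unfolding HH_def by auto

lemma HH_vertI: "fplay (snd G) p a \<Longrightarrow> pcls (snd G) p a \<in> fst (HH G)"
  unfolding HH_def by auto

lemma part1:
  assumes G: "hypergraph G"
  shows "hypergraph (HH G) \<and> hmorph (HH G) G counit"
proof
  show "hypergraph (HH G)" unfolding hypergraph_def
  proof
    fix U assume "U \<in> snd (HH G)"
    then obtain p where p: "p \<noteq> []" "set p \<subseteq> snd G" and U: "U = (\<lambda>a. pcls (snd G) p a) ` last p"
      by (rule HH_edgeE)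
    have "last p \<in> snd G" using p by auto
    then have "finite (last p)" using G unfolding hypergraph_def by blast
    then have "finite U" using U by simp
    moreover have "U \<subseteq> fst (HH G)" using U p by (auto intro!: HH_vertI simp: fplay_def)
    ultimately show "finite U \<and> U \<subseteq> fst (HH G)" by blast
  qed
  show "hmorph (HH G) G counit" unfolding hmorph_def
  proof
    show "counit ` fst (HH G) \<subseteq> fst G"
    proof
      fix y assume "y \<in> counit ` fst (HH G)"
      then obtain x where x: "x \<in> fst (HH G)" "y = counit x" by blast
      from x(1) obtain p a where pa: "fplay (snd G) p a" "x = pcls (snd G) p a" by (rule HH_vertE)
      then have "y = a" using x(2) pa counit_pcls by simp
      moreover have "last p \<in> snd G" using pa unfolding fplay_def by auto
      then have "last p \<subseteq> fst G" using G unfolding hypergraph_def by simp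
      moreover have "a \<in> last p" using pa unfolding fplay_def by simp
      ultimately show "y \<in> fst G" using \<open>y = a\<close> by blast
    qed
    show "\<forall>U\<in>snd (HH G). counit ` U \<in> snd G"
    proof
      fix U assume "U \<in> snd (HH G)"
      then obtain p where p: "p \<noteq> []" "set p \<subseteq> snd G" and U: "U = (\<lambda>a. pcls (snd G) p a) ` last p"
        by (rule HH_edgeE)
      have "counit ` U = last p" unfolding U image_image
        using p by (auto simp: counit_pcls fplay_def)
      then show "counit ` U \<in> snd G" using p by auto
    qed
  qed
qed

lemma hmorph_comp: "hmorph A B f \<Longrightarrow> hmorph B C g \<Longrightarrow> hmorph A C (g \<circ> f)"
proof -
  assume f: "hmorph A B f" and g: "hmorph B C g"
  have f1: "f ` fst A \<subseteq> fst B" using f unfolding hmorph_def by simp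
  have g1: "g ` fst B \<subseteq> fst C" using g unfolding hmorph_def by simp
  have "g ` f ` fst A \<subseteq> g ` fst B" using f1 by (rule image_mono)
  then have "(g \<circ> f) ` fst A \<subseteq> fst C" using g1 unfolding image_comp[symmetric] by (rule order_trans)
  moreover have "\<forall>U\<in>snd A. (g \<circ> f) ` U \<in> snd C"
    using f g unfolding hmorph_def image_comp[symmetric] by blast
  ultimately show ?thesis unfolding hmorph_def by blast
qed

lemma part2:
  assumes h: "hmorph (HH G1) G2 h"
  shows "hmorph (HH G1) (HH G2) (coext G1 G2 h)"
  unfolding hmorph_def
proof
  show "coext G1 G2 h ` fst (HH G1) \<subseteq> fst (HH G2)"
  proof
    fix y assume "y \<in> coext G1 G2 h ` fst (HH G1)"
    then obtain x where x: "x \<in> fst (HH G1)" "y = coext G1 G2 h x" by blast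
    from x(1) obtain p a where pa: "fplay (snd G1) p a" "x = pcls (snd G1) p a" by (rule HH_vertE)
    show "y \<in> fst (HH G2)" using HH_vertI[OF fplay_CL[OF h pa(1)]] coext_pcls[OF pa(1), of G2 h] x(2) pa(2) by simp
  qed
  show "\<forall>U\<in>snd (HH G1). coext G1 G2 h ` U \<in> snd (HH G2)"
  proof
    fix U assume "U \<in> snd (HH G1)"
    then obtain p where p: "p \<noteq> []" "set p \<subseteq> snd G1" and U: "U = (\<lambda>a. pcls (snd G1) p a) ` last p"
      by (rule HH_edgeE)
    let ?P = "coext_list (snd G1) h p"
    have fp: "\<And>a. a \<in> last p \<Longrightarrow> fplay (snd G1) p a" using p unfolding fplay_def by auto
    have "coext G1 G2 h ` U = (\<lambda>a. pcls (snd G2) ?P (h (pcls (snd G1) p a))) ` last p"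
      unfolding U image_image by (rule image_cong[OF refl], rule coext_pcls, erule fp)
    also have "\<dots> = (\<lambda>b. pcls (snd G2) ?P b) ` last ?P"
      using last_CL[OF p(1), of "snd G1" h] by auto
    also have "\<dots> \<in> snd (HH G2)"
      using HH_edgeI[of ?P G2] CL_edges[OF h p(2)] p(1) by (metis length_CL length_0_conv)
    finally show "coext G1 G2 h ` U \<in> snd (HH G2)" .
  qed
qed

lemma CL_counit:
  assumes "set p \<subseteq> E"
  shows "coext_list E counit p = p"
proof (rule nth_equalityI)
  show "length (coext_list E counit p) = length p" by simp
  fix j assume "j < length (coext_list E counit p)"
  then have j: "j < length p" by simp
  have "coext_list E counit p ! j = {counit (pcls E (take (Suc j) p) b) | b. b \<in> p ! j}"
    using nth_CL[OF j] .
  also have "\<dots> = (\<lambda>b. counit (pcls E (take (Suc j) p) b)) ` (p ! j)" by (simp add: Setcompr_eq_image)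
  also have "\<dots> = (\<lambda>b. b) ` (p ! j)"
    by (rule image_cong[OF refl]) (simp add: counit_pcls fplay_take[OF assms j])
  also have "\<dots> = p ! j" by simp
  finally show "coext_list E counit p ! j = p ! j" .
qed

lemma CL_comp:
  assumes h: "hmorph (HH G1) G2 h" and p: "set p \<subseteq> snd G1"
  shows "coext_list (snd G1) (g \<circ> coext G1 G2 h) p = coext_list (snd G2) g (coext_list (snd G1) h p)"
proof (rule nth_equalityI)
  show "length (coext_list (snd G1) (g \<circ> coext G1 G2 h) p) = length (coext_list (snd G2) g (coext_list (snd G1) h p))"
    by simp
  fix j assume "j < length (coext_list (snd G1) (g \<circ> coext G1 G2 h) p)"
  then have j: "j < length p" by simp
  let ?P = "coext_list (snd G1) h p"
  have e: "coext G1 G2 h (pcls (snd G1) (take (Suc j) p) b)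
      = pcls (snd G2) (take (Suc j) ?P) (h (pcls (snd G1) (take (Suc j) p) b))" if b: "b \<in> p ! j" for b
    using coext_pcls[OF fplay_take[OF p j b], of G2 h] take_CL[of "Suc j" "snd G1" h p] by simp
  have "coext_list (snd G1) (g \<circ> coext G1 G2 h) p ! j
     = (\<lambda>b. g (coext G1 G2 h (pcls (snd G1) (take (Suc j) p) b))) ` (p ! j)"
    by (simp add: nth_CL[OF j] Setcompr_eq_image)
  also have "\<dots> = (\<lambda>b. g (pcls (snd G2) (take (Suc j) ?P) (h (pcls (snd G1) (take (Suc j) p) b)))) ` (p ! j)"
    by (rule image_cong) (simp_all add: e)
  also have "\<dots> = (\<lambda>d. g (pcls (snd G2) (take (Suc j) ?P) d)) ` (?P ! j)"
    by (simp add: nth_CL[OF j] Setcompr_eq_image image_image)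
  also have "\<dots> = coext_list (snd G2) g ?P ! j"
    using j by (simp add: nth_CL Setcompr_eq_image)
  finally show "coext_list (snd G1) (g \<circ> coext G1 G2 h) p ! j = coext_list (snd G2) g ?P ! j" .
qed

theorem theorem6p1:
  shows "(\<forall>G :: 'a hgraph. hypergraph G \<longrightarrow>
            hypergraph (HH G) \<and> hmorph (HH G) G counit \<and>
            (\<forall>p a. fplay (snd G) p a \<longrightarrow> counit (pcls (snd G) p a) = a))
       \<and> (\<forall>(G1 :: 'a hgraph) (G2 :: 'b hgraph) h. hypergraph G1 \<and> hypergraph G2 \<and> hmorph (HH G1) G2 h \<longrightarrow>
            hmorph (HH G1) (HH G2) (coext G1 G2 h) \<and>
            (\<forall>p a. fplay (snd G1) p a \<longrightarrow>
               coext G1 G2 h (pcls (snd G1) p a) =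
                 pcls (snd G2) (coext_list (snd G1) h p) (h (pcls (snd G1) p a))))
       \<and> (\<forall>G :: 'a hgraph. hypergraph G \<longrightarrow>
            (\<forall>c\<in>fst (HH G). coext G G counit c = c))
       \<and> (\<forall>(G1 :: 'a hgraph) (G2 :: 'b hgraph) h. hypergraph G1 \<and> hypergraph G2 \<and> hmorph (HH G1) G2 h \<longrightarrow>
            (\<forall>c\<in>fst (HH G1). counit (coext G1 G2 h c) = h c))
       \<and> (\<forall>(G1 :: 'a hgraph) (G2 :: 'b hgraph) (G3 :: 'c hgraph) h g.
            hypergraph G1 \<and> hypergraph G2 \<and> hypergraph G3 \<and>
            hmorph (HH G1) G2 h \<and> hmorph (HH G2) G3 g \<longrightarrow>
            (\<forall>c\<in>fst (HH G1). coext G1 G3 (g \<circ> coext G1 G2 h) c = coext G2 G3 g (coext G1 G2 h c)))"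
proof (intro conjI allI impI ballI)
  fix G :: "'a hgraph" assume G: "hypergraph G"
  show "hypergraph (HH G)" "hmorph (HH G) G counit" using part1[OF G] by auto
  fix p a assume "fplay (snd G) p a"
  then show "counit (pcls (snd G) p a) = a" by (rule counit_pcls)
next
  fix G1 :: "'a hgraph" and G2 :: "'b hgraph" and h
  assume a: "hypergraph G1 \<and> hypergraph G2 \<and> hmorph (HH G1) G2 h"
  then show "hmorph (HH G1) (HH G2) (coext G1 G2 h)" using part2 by blast
  fix p a assume "fplay (snd G1) p a"
  then show "coext G1 G2 h (pcls (snd G1) p a) =
                 pcls (snd G2) (coext_list (snd G1) h p) (h (pcls (snd G1) p a))" by (rule coext_pcls)
next
  fix G :: "'a hgraph" and c assume G: "hypergraph G" and c: "c \<in> fst (HH G)"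
  then obtain p a where pa: "fplay (snd G) p a" "c = pcls (snd G) p a" by (metis HH_vertE)
  have "set p \<subseteq> snd G" using pa unfolding fplay_def by auto
  have "coext G G counit c = pcls (snd G) (coext_list (snd G) counit p) (counit (pcls (snd G) p a))"
    using coext_pcls[OF pa(1)] pa(2) by simp
  also have "\<dots> = c" using CL_counit[OF \<open>set p \<subseteq> snd G\<close>] counit_pcls[OF pa(1)] pa(2) by simp
  finally show "coext G G counit c = c" .
next
  fix G1 :: "'a hgraph" and G2 :: "'b hgraph" and h c
  assume a: "hypergraph G1 \<and> hypergraph G2 \<and> hmorph (HH G1) G2 h" and c: "c \<in> fst (HH G1)"
  then obtain p a where pa: "fplay (snd G1) p a" "c = pcls (snd G1) p a" by (metis HH_vertE)
  have h: "hmorph (HH G1) G2 h" using a by blast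
  have "coext G1 G2 h c = pcls (snd G2) (coext_list (snd G1) h p) (h c)"
    using coext_pcls[OF pa(1)] pa(2) by simp
  then show "counit (coext G1 G2 h c) = h c"
    using counit_pcls[OF fplay_CL[OF h pa(1)]] pa(2) by simp
next
  fix G1 :: "'a hgraph" and G2 :: "'b hgraph" and G3 :: "'c hgraph" and h g c
  assume a: "hypergraph G1 \<and> hypergraph G2 \<and> hypergraph G3 \<and> hmorph (HH G1) G2 h \<and> hmorph (HH G2) G3 g"
    and c: "c \<in> fst (HH G1)"
  then have h: "hmorph (HH G1) G2 h" by blast
  from c obtain p a where pa: "fplay (snd G1) p a" "c = pcls (snd G1) p a" by (metis HH_vertE)
  have sp: "set p \<subseteq> snd G1" using pa unfolding fplay_def by auto
  let ?P = "coext_list (snd G1) h p"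
  have cc: "coext G1 G2 h c = pcls (snd G2) ?P (h c)" using coext_pcls[OF pa(1)] pa(2) by simp
  have fP: "fplay (snd G2) ?P (h c)" using fplay_CL[OF h pa(1)] pa(2) by simp
  have "coext G1 G3 (g \<circ> coext G1 G2 h) c
      = pcls (snd G3) (coext_list (snd G1) (g \<circ> coext G1 G2 h) p) (g (coext G1 G2 h c))"
    using coext_pcls[OF pa(1), of G3 "g \<circ> coext G1 G2 h"] pa(2) by simp
  also have "\<dots> = pcls (snd G3) (coext_list (snd G2) g ?P) (g (pcls (snd G2) ?P (h c)))"
    by (subst CL_comp[OF h sp], subst cc, rule refl)
  also have "\<dots> = coext G2 G3 g (coext G1 G2 h c)"
    using coext_pcls[OF fP, of G3 g] cc by simp
  finally show "coext G1 G3 (g \<circ> coext G1 G2 h) c = coext G2 G3 g (coext G1 G2 h c)" .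
qed

end
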